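(* Let $a,q,\mu^1,\dots,\mu^n,\eta^1,\dots,\eta^n$ be smooth functions of $R^1,\dots,R^n$, with all $\mu^i$ nowhere zero, satisfying for all $i\ne j$ (with $D_{ij}:=\mu^i(a\eta^j-q)-\mu^j(a\eta^i-q)$ nowhere zero) $$q_i=\eta^ia_i,\quad a_{ij}=\frac{(\mu^i+\mu^j)(\eta^j-\eta^i)}{D_{ij}}a_ia_j,\quad \eta^i_j=\frac{\mu^i(\eta^j-\eta^i)^2}{D_{ij}}a_j,\quad \mu^i_j=\frac{\mu^i(\eta^j-\eta^i)(\mu^j-\mu^i)}{D_{ij}}a_j.$$ Then, locally, there is a function $u$ with $u_i=a_i/\mu^i$ for all $i$; the functions $c^i:=(a\eta^i-q)/\mu^i$ satisfy $\partial c^i/\partial R^j=0$ for $j\ne i$; and the system takes the form $$q_i=\mu^i\eta^iu_i,\quad u_{ij}=2\frac{\eta^j-\eta^i}{c^j-c^i}u_iu_j,\quad \eta^i_j=\frac{(\eta^j-\eta^i)^2}{c^j-c^i}u_j,\quad \mu^i_j=\frac{(\eta^j-\eta^i)(\mu^j-\mu^i)}{c^j-c^i}u_j\qquad(i\ne j).$$ In particular $u,\eta^i$ satisfy the same system $\eta^i_j=\frac{(\eta^j-\eta^i)^2}{c^j-c^i}u_j$, $u_{ij}=2\frac{\eta^j-\eta^i}{c^j-c^i}u_iu_j$ as in the second heavenly case.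
   Context: Lower indices denote partial derivatives with respect to $R^1,\dots,R^n$, e.g. $a_i=\partial a/\partial R^i$, $\eta^i_j=\partial\eta^i/\partial R^j$. (This is the Gibbons-Tsarev system for hydrodynamic reductions of the first heavenly equation $\Omega_{xy}\Omega_{zt}-\Omega_{xt}\Omega_{zy}=1$ with $a=\Omega_{xy}$, $q=\Omega_{zy}$.) *)

theory Defs
  imports "HOL-Analysis.Analysis"
begin

definition pd :: "'n::finite \<Rightarrow> (real^'n \<Rightarrow> real) \<Rightarrow> real^'n \<Rightarrow> real" where
  "pd i f x = deriv (\<lambda>t. f (x + t *\<^sub>R axis i 1)) 0"

fun pds :: "'n::finite list \<Rightarrow> (real^'n \<Rightarrow> real) \<Rightarrow> real^'n \<Rightarrow> real" where
  "pds [] f = f"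
| "pds (i # is) f = pd i (pds is f)"

definition smooth_on :: "(real^'n::finite) set \<Rightarrow> (real^'n \<Rightarrow> real) \<Rightarrow> bool" where
  "smooth_on U f \<longleftrightarrow> (\<forall>is. pds is f differentiable_on U)"

end

theory Submission
  imports Defs
begin


lemma pd_has:
  fixes f :: "real^'n::finite \<Rightarrow> real"
  assumes "f differentiable (at x)"
  shows "((\<lambda>t. f (x + t *\<^sub>R axis i 1)) has_real_derivative pd i f x) (at 0)"
proof -
  have "(\<lambda>t::real. x + t *\<^sub>R axis i 1) differentiable (at 0)"
    by (intro derivative_intros)
  moreover have "f differentiable (at ((\<lambda>t::real. x + t *\<^sub>R axis i 1) 0))" using assms by simp
  ultimately have "(f \<circ> (\<lambda>t::real. x + t *\<^sub>R axis i 1)) differentiable (at 0)"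
    by (rule differentiable_chain_at)
  hence "DERIV (f \<circ> (\<lambda>t::real. x + t *\<^sub>R axis i 1)) 0 :> deriv (f \<circ> (\<lambda>t::real. x + t *\<^sub>R axis i 1)) 0"
    by (simp add: DERIV_deriv_iff_real_differentiable)
  thus ?thesis by (simp add: pd_def o_def)
qed

lemma pd_frechet:
  fixes f :: "real^'n::finite \<Rightarrow> real"
  assumes "(f has_derivative D) (at x)"
  shows "pd i f x = D (axis i 1)"
proof -
  have l: "linear D" using assms has_derivative_linear by blast
  have "((\<lambda>t::real. x + t *\<^sub>R axis i 1) has_derivative (\<lambda>t. t *\<^sub>R axis i 1)) (at 0)"
    by (auto intro!: derivative_eq_intros)
  moreover have "(f has_derivative D) (at ((\<lambda>t::real. x + t *\<^sub>R axis i 1) 0))" using assms by simp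
  ultimately have "((\<lambda>t. f (x + t *\<^sub>R axis i 1)) has_derivative (\<lambda>t. D (t *\<^sub>R axis i 1))) (at 0)"
    by (rule has_derivative_compose)
  moreover have "(\<lambda>t. D (t *\<^sub>R axis i 1)) = (*) (D (axis i 1))"
    using l by (auto simp: linear_scale mult.commute)
  ultimately have "((\<lambda>t. f (x + t *\<^sub>R axis i 1)) has_real_derivative D (axis i 1)) (at 0)"
    unfolding has_field_derivative_def by simp
  thus ?thesis unfolding pd_def by (rule DERIV_imp_deriv)
qed

lemma frechet_expand:
  fixes f :: "real^'n::finite \<Rightarrow> real"
  assumes "(f has_derivative D) (at x)"
  shows "D v = (\<Sum>m\<in>UNIV. v$m * pd m f x)"
proof -
  have l: "linear D" using assms has_derivative_linear by blast
  have "D v = D (\<Sum>m\<in>UNIV. v$m *\<^sub>R axis m 1)"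
    using basis_expansion[of v] by (simp add: scalar_mult_eq_scaleR)
  also have "\<dots> = (\<Sum>m\<in>UNIV. v$m * D (axis m 1))"
    using l by (simp add: linear_sum linear_scale)
  finally show ?thesis using pd_frechet[OF assms] by simp
qed

lemma pd_local:
  fixes f g :: "real^'n::finite \<Rightarrow> real"
  assumes "open V" "\<And>y. y \<in> V \<Longrightarrow> f y = g y" "x \<in> V"
  shows "pd i f x = pd i g x"
proof -
  have "((\<lambda>t::real. x + t *\<^sub>R axis i 1) \<longlongrightarrow> x + 0 *\<^sub>R axis i 1) (nhds 0)"
    by (intro tendsto_intros filterlim_ident)
  hence c: "((\<lambda>t::real. x + t *\<^sub>R axis i 1) \<longlongrightarrow> x) (nhds 0)" by simp
  have "eventually (\<lambda>y. y \<in> V) (nhds x)" using assms by (simp add: eventually_nhds_in_open)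
  hence "eventually (\<lambda>t. x + t *\<^sub>R axis i 1 \<in> V) (nhds (0::real))"
    using c unfolding filterlim_iff by blast
  hence "eventually (\<lambda>t. f (x + t *\<^sub>R axis i 1) = g (x + t *\<^sub>R axis i 1)) (nhds (0::real))"
    by eventually_elim (simp add: assms)
  thus ?thesis unfolding pd_def by (intro deriv_cong_ev) auto
qed

lemma pds_local:
  fixes f g :: "real^'n::finite \<Rightarrow> real"
  assumes "open V" "\<And>y. y \<in> V \<Longrightarrow> f y = g y"
  shows "y \<in> V \<Longrightarrow> pds js f y = pds js g y"
proof (induction js arbitrary: y)
  case Nil then show ?case using assms by simp
next
  case (Cons i js) then show ?case using pd_local[OF assms(1), of "pds js f" "pds js g" y i] by simp
qed

lemma pds_append: "pds (js @ [k]) f = pds js (pd k f)"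
  by (induction js) auto

lemma pd_const: "pd i (\<lambda>y. c) x = 0"
  unfolding pd_def by simp


lemma pd_add:
  fixes f g :: "real^'n::finite \<Rightarrow> real"
  assumes "f differentiable (at x)" "g differentiable (at x)"
  shows "pd i (\<lambda>y. f y + g y) x = pd i f x + pd i g x"
  unfolding pd_def[of i "\<lambda>y. f y + g y"]
  by (rule DERIV_imp_deriv, rule DERIV_add[OF pd_has[OF assms(1), of i] pd_has[OF assms(2), of i]])

lemma pd_mult:
  fixes f g :: "real^'n::finite \<Rightarrow> real"
  assumes "f differentiable (at x)" "g differentiable (at x)"
  shows "pd i (\<lambda>y. f y * g y) x = pd i f x * g x + f x * pd i g x"
  unfolding pd_def[of i "\<lambda>y. f y * g y"]
  using DERIV_mult[OF pd_has[OF assms(1), of i] pd_has[OF assms(2), of i]]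
  by (intro DERIV_imp_deriv) (simp add: mult.commute)

lemma pd_inv:
  fixes f :: "real^'n::finite \<Rightarrow> real"
  assumes "f differentiable (at x)" "f x \<noteq> 0"
  shows "pd i (\<lambda>y. 1 / f y) x = pd i f x * (-1 * (1 / f x * (1 / f x)))"
proof -
  have "DERIV (\<lambda>t. inverse (f (x + t *\<^sub>R axis i 1))) 0 :> -(pd i f x * (inverse (f x) * inverse (f x)))"
    using DERIV_inverse_fun[OF pd_has[OF assms(1), of i]] assms(2) by simp
  moreover have "-(pd i f x * (inverse (f x) * inverse (f x))) = pd i f x * (-1 * (1 / f x * (1 / f x)))"
    by (simp add: power2_eq_square inverse_eq_divide)
  ultimately have "((\<lambda>t. 1 / f (x + t *\<^sub>R axis i 1)) has_real_derivative pd i f x * (-1 * (1 / f x * (1 / f x)))) (at 0)"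
    by (simp add: inverse_eq_divide)
  thus ?thesis unfolding pd_def[of i "\<lambda>y. 1 / f y"] by (rule DERIV_imp_deriv)
qed

definition Cn :: "(real^'n::finite) set \<Rightarrow> nat \<Rightarrow> (real^'n \<Rightarrow> real) \<Rightarrow> bool" where
  "Cn V n f \<longleftrightarrow> (\<forall>js. length js \<le> n \<longrightarrow> pds js f differentiable_on V)"

lemma smooth_Cn: "smooth_on V f \<longleftrightarrow> (\<forall>n. Cn V n f)"
  unfolding smooth_on_def Cn_def by (meson order_refl)

lemma Cn_mono: "Cn V n f \<Longrightarrow> m \<le> n \<Longrightarrow> Cn V m f"
  unfolding Cn_def by auto

lemma Cn_pd: assumes "Cn V (Suc n) f" shows "Cn V n (pd k f)"
  unfolding Cn_def
proof (intro allI impI)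
  fix js :: "'a list" assume "length js \<le> n"
  with assms have "pds (js@[k]) f differentiable_on V" unfolding Cn_def by simp
  then show "pds js (pd k f) differentiable_on V" by (simp add: pds_append)
qed

lemma Cn_diff_at:
  assumes "Cn V n f" "open V" "length js \<le> n" "y \<in> V"
  shows "pds js f differentiable (at y)"
proof -
  have "pds js f differentiable_on V" using assms(1,3) unfolding Cn_def by simp
  hence "pds js f differentiable (at y within V)" using assms(4) by (simp add: differentiable_on_def)
  thus ?thesis using at_within_open[OF assms(4,2)] by simp
qed

lemma diff_on_cong:
  assumes "f differentiable_on V" "\<And>y. y \<in> V \<Longrightarrow> f y = g y"
  shows "g differentiable_on V"
  unfolding differentiable_on_def
proof
  fix x assume "x \<in> V"
  have d: "f differentiable at x within V" using assms(1) \<open>x \<in> V\<close> by (simp add: differentiable_on_def)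
  show "g differentiable at x within V"
    by (rule differentiable_transform_within[OF d zero_less_one \<open>x \<in> V\<close>]) (simp add: assms(2))
qed

lemma Cn_cong:
  assumes "open V" "\<And>y. y \<in> V \<Longrightarrow> f y = g y" "Cn V n f"
  shows "Cn V n g"
  unfolding Cn_def
proof (intro allI impI)
  fix js :: "'a list" assume "length js \<le> n"
  then have "pds js f differentiable_on V" using assms(3) unfolding Cn_def by simp
  then show "pds js g differentiable_on V"
    by (rule diff_on_cong) (rule pds_local[OF assms(1,2)])
qed



lemma Cn_0: "Cn V n f \<Longrightarrow> f differentiable_on V"
  unfolding Cn_def by (metis list.size(3) le0 pds.simps(1))

lemma pds_const_Cons: "pds (a#js) (\<lambda>y. c) = (\<lambda>y. 0)"
proof (induction js arbitrary: a)
  case Nil then show ?case by (simp add: fun_eq_iff pd_const)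
next
  case (Cons b js)
  have "pds (a#b#js) (\<lambda>y. c) = pd a (pds (b#js) (\<lambda>y. c))" by (rule pds.simps(2))
  also have "\<dots> = pd a (\<lambda>y. 0)" by (simp only: Cons.IH)
  finally show ?case by (simp add: fun_eq_iff pd_const del: pds.simps(2))
qed

lemma Cn_const: "Cn V n (\<lambda>y. c)"
  unfolding Cn_def
proof (intro allI impI)
  fix js :: "'a list"
  show "pds js (\<lambda>y. c) differentiable_on V"
    by (cases js) (simp_all add: pds_const_Cons differentiable_on_def del: pds.simps(2))
qed

lemma Cn_add:
  assumes "open V" "Cn V n f" "Cn V n g"
  shows "Cn V n (\<lambda>y. f y + g y)"
proof -
  have eq: "length js \<le> n \<Longrightarrow> y \<in> V \<Longrightarrow> pds js (\<lambda>y. f y + g y) y = pds js f y + pds js g y" for js y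
  proof (induction js arbitrary: y)
    case Nil then show ?case by simp
  next
    case (Cons i js)
    have h: "\<And>z. z \<in> V \<Longrightarrow> pds js (\<lambda>y. f y + g y) z = pds js f z + pds js g z"
      using Cons.IH Cons.prems by simp
    have "pds (i#js) (\<lambda>y. f y + g y) y = pd i (\<lambda>y. pds js f y + pds js g y) y"
      unfolding pds.simps by (rule pd_local[OF assms(1) h Cons.prems(2)])
    also have "\<dots> = pds (i#js) f y + pds (i#js) g y"
    proof -
      have l: "length js \<le> n" using Cons.prems by simp
      show ?thesis using Cn_diff_at[OF assms(2,1) l Cons.prems(2)] Cn_diff_at[OF assms(3,1) l Cons.prems(2)]
        by (simp add: pd_add)
    qed
    finally show ?case .
  qed
  show ?thesis unfolding Cn_def
  proof (intro allI impI)
    fix js :: "'a list" assume l: "length js \<le> n"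
    have "(\<lambda>y. pds js f y + pds js g y) differentiable_on V"
      using assms(2,3) l unfolding Cn_def by (intro differentiable_on_add) simp_all
    then show "pds js (\<lambda>y. f y + g y) differentiable_on V"
      by (rule diff_on_cong) (simp add: eq[OF l])
  qed
qed

lemma Cn_mult:
  assumes "open V" 
  shows "Cn V n f \<Longrightarrow> Cn V n g \<Longrightarrow> Cn V n (\<lambda>y. f y * g y)"
proof (induction n arbitrary: f g)
  case 0
  then show ?case unfolding Cn_def by (simp add: differentiable_on_mult)
next
  case (Suc n)
  show ?case unfolding Cn_def
  proof (intro allI impI)
    fix js :: "'a list" assume len: "length js \<le> Suc n"
    show "pds js (\<lambda>y. f y * g y) differentiable_on V"
    proof (cases js rule: rev_cases)
      case Nil then show ?thesis using Cn_0[OF Suc.prems(1)] Cn_0[OF Suc.prems(2)]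
        by (simp add: differentiable_on_mult)
    next
      case (snoc js' k)
      have l: "length js' \<le> n" using len snoc by simp
      have e: "y \<in> V \<Longrightarrow> pd k (\<lambda>y. f y * g y) y = pd k f y * g y + f y * pd k g y" for y
        using Cn_diff_at[OF Suc.prems(1) assms, of "[]"] Cn_diff_at[OF Suc.prems(2) assms, of "[]"]
        by (intro pd_mult) simp_all
      have m: "Cn V n f" "Cn V n g" using Suc.prems by (auto intro: Cn_mono)
      have c: "Cn V n (\<lambda>y. pd k f y * g y + f y * pd k g y)"
        by (intro Cn_add assms Suc.IH Cn_pd Suc.prems m)
      have "Cn V n (pd k (\<lambda>y. f y * g y))"
        by (rule Cn_cong[OF assms _ c]) (simp add: e)
      then show ?thesis using l snoc by (simp add: pds_append Cn_def)
    qed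
  qed
qed

lemma Cn_inv:
  assumes "open V" "\<And>y. y \<in> V \<Longrightarrow> f y \<noteq> 0"
  shows "Cn V n f \<Longrightarrow> Cn V n (\<lambda>y. 1 / f y)"
proof (induction n)
  case 0
  have "(\<lambda>y. inverse (f y)) differentiable_on V"
    using Cn_0[OF 0] assms(2) by (rule differentiable_on_inverse)
  then show ?case unfolding Cn_def by (simp add: inverse_eq_divide)
next
  case (Suc n)
  show ?case unfolding Cn_def
  proof (intro allI impI)
    fix js :: "'a list" assume len: "length js \<le> Suc n"
    show "pds js (\<lambda>y. 1 / f y) differentiable_on V"
    proof (cases js rule: rev_cases)
      case Nil
      have "(\<lambda>y. inverse (f y)) differentiable_on V"
        using Cn_0[OF Suc.prems] assms(2) by (rule differentiable_on_inverse)
      then show ?thesis using Nil by (simp add: inverse_eq_divide)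
    next
      case (snoc js' k)
      have l: "length js' \<le> n" using len snoc by simp
      have e: "y \<in> V \<Longrightarrow> pd k (\<lambda>y. 1 / f y) y = pd k f y * (-1 * (1 / f y * (1 / f y)))" for y
        using Cn_diff_at[OF Suc.prems assms(1), of "[]"] assms(2)
        by (intro pd_inv) simp_all
      have "Cn V n f" by (rule Cn_mono[OF Suc.prems]) simp
      hence i: "Cn V n (\<lambda>y. 1 / f y)" by (rule Suc.IH)
      have c: "Cn V n (\<lambda>y. pd k f y * (-1 * (1 / f y * (1 / f y))))"
        by (intro Cn_mult assms Cn_pd Cn_const Suc.prems i)
      have "Cn V n (pd k (\<lambda>y. 1 / f y))"
        by (rule Cn_cong[OF assms(1) _ c]) (simp add: e)
      then show ?thesis using l snoc by (simp add: pds_append Cn_def)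
    qed
  qed
qed



definition Bm :: "'n::finite \<Rightarrow> (real^'n) \<Rightarrow>\<^sub>L real" where "Bm m = Blinfun (\<lambda>h. h $ m)"

lemma Bm_apply[simp]: "blinfun_apply (Bm m) h = h $ m"
  unfolding Bm_def by (simp add: bounded_linear_Blinfun_apply bounded_linear_vec_nth)

lemma axis_sum: "(\<Sum>m\<in>UNIV. c m * (axis i (1::real)) $ m) = c i"
  by (simp add: axis_def if_distrib if_distribR cong: if_cong)

lemma poincare:
  fixes f :: "'n::finite \<Rightarrow> real^'n \<Rightarrow> real" and U :: "(real^'n) set"
  assumes U: "open U" "x0 \<in> U"
    and diff: "\<And>k. f k differentiable_on U"
    and cont: "\<And>k m. continuous_on U (pd m (f k))"
    and closed: "\<And>k m x. x \<in> U \<Longrightarrow> pd m (f k) x = pd k (f m) x"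
  shows "\<exists>V u. open V \<and> x0 \<in> V \<and> V \<subseteq> U \<and> u differentiable_on V \<and> (\<forall>i. \<forall>x\<in>V. pd i u x = f i x)"
proof -
  obtain r where r: "r > 0" "ball x0 r \<subseteq> U" using U openE by blast
  define V where "V = ball x0 r"
  have V: "open V" "x0 \<in> V" "V \<subseteq> U" "convex V" using r by (auto simp: V_def)
  define p where "p y t = x0 + t *\<^sub>R (y - x0)" for y :: "real^'n" and t :: real
  have pV: "p y t \<in> V" if "y \<in> V" "t \<in> cbox 0 1" for y t
  proof -
    have "p y t = (1 - t) *\<^sub>R x0 + t *\<^sub>R y" by (simp add: p_def algebra_simps)
    then show ?thesis using convexD[OF V(4) V(2) that(1), of "1 - t" t] that(2) by (auto simp: cbox_interval)
  qed
  have fdiff: "(f k has_derivative frechet_derivative (f k) (at z)) (at z)" if "z \<in> U" for k z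
  proof -
    have "f k differentiable (at z within U)" using diff[of k] that
      by (simp add: differentiable_on_def)
    hence "f k differentiable (at z)" by (simp only: at_within_open[OF that U(1)])
    thus ?thesis by (simp add: frechet_derivative_works[symmetric])
  qed
  define g where "g y t = (\<Sum>k\<in>UNIV. f k (p y t) * (y - x0) $ k)" for y and t :: real
  define C where "C m y t = (\<Sum>k\<in>UNIV. t * pd m (f k) (p y t) * (y - x0) $ k) + f m (p y t)" for m y and t :: real
  define fx where "fx y t = (\<Sum>m\<in>UNIV. C m y t *\<^sub>R Bm m)" for y and t :: real
  define u where "u y = integral (cbox 0 1) (g y)" for y

  have gder: "((\<lambda>y. g y t) has_derivative blinfun_apply (fx y t)) (at y within V)"
    if yt: "y \<in> V" "t \<in> cbox 0 1" for y t
  proof -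
    let ?p = "p y t"
    have pU: "?p \<in> U" using pV[OF yt] V(3) by auto
    have pd': "((\<lambda>y. p y t) has_derivative (\<lambda>h. t *\<^sub>R h)) (at y within V)"
      unfolding p_def by (auto intro!: derivative_eq_intros)
    have fk: "((\<lambda>y. f k (p y t)) has_derivative (\<lambda>h. frechet_derivative (f k) (at ?p) (t *\<^sub>R h))) (at y within V)" for k
      using has_derivative_compose[OF pd' fdiff[OF pU]] .
    have lin: "((\<lambda>y. (y - x0) $ k) has_derivative (\<lambda>h. h $ k)) (at y within V)" for k
      by (auto intro!: derivative_eq_intros bounded_linear_imp_has_derivative)
    have "((\<lambda>y. \<Sum>k\<in>UNIV. f k (p y t) * (y - x0) $ k) has_derivative
         (\<lambda>h. \<Sum>k\<in>UNIV. f k ?p * h $ k + frechet_derivative (f k) (at ?p) (t *\<^sub>R h) * (y - x0) $ k)) (at y within V)"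
      by (intro has_derivative_sum has_derivative_mult fk lin)
    moreover have "(\<lambda>h. \<Sum>k\<in>UNIV. f k ?p * h $ k + frechet_derivative (f k) (at ?p) (t *\<^sub>R h) * (y - x0) $ k)
        = blinfun_apply (fx y t)"
    proof
      fix h
      have e1: "frechet_derivative (f k) (at ?p) (t *\<^sub>R h) = (\<Sum>m\<in>UNIV. t * h$m * pd m (f k) ?p)" for k
        using frechet_expand[OF fdiff[OF pU], where v="t *\<^sub>R h"] by (simp add: mult.assoc)
      have "(\<Sum>k\<in>UNIV. f k ?p * h $ k + frechet_derivative (f k) (at ?p) (t *\<^sub>R h) * (y - x0) $ k)
          = (\<Sum>k\<in>UNIV. f k ?p * h $ k) + (\<Sum>k\<in>UNIV. \<Sum>m\<in>UNIV. t * h$m * pd m (f k) ?p * (y - x0) $ k)"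
        by (simp add: e1 sum.distrib sum_distrib_right)
      also have "\<dots> = (\<Sum>m\<in>UNIV. f m ?p * h $ m) + (\<Sum>m\<in>UNIV. \<Sum>k\<in>UNIV. t * h$m * pd m (f k) ?p * (y - x0) $ k)"
        using sum.swap[of "\<lambda>k m. t * h$m * pd m (f k) ?p * (y - x0) $ k" UNIV UNIV] by simp
      also have "\<dots> = (\<Sum>m\<in>UNIV. f m ?p * h $ m + (\<Sum>k\<in>UNIV. t * h$m * pd m (f k) ?p * (y - x0) $ k))"
        by (simp add: sum.distrib)
      also have "\<dots> = (\<Sum>m\<in>UNIV. C m y t * h $ m)"
        unfolding C_def by (intro sum.cong refl) (simp add: sum_distrib_left sum_distrib_right algebra_simps)
      also have "\<dots> = blinfun_apply (fx y t) h"
        by (simp add: fx_def blinfun.sum_left blinfun.scaleR_left)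
      finally show "(\<Sum>k\<in>UNIV. f k ?p * h $ k + frechet_derivative (f k) (at ?p) (t *\<^sub>R h) * (y - x0) $ k)
          = blinfun_apply (fx y t) h" .
    qed
    ultimately show ?thesis by (simp add: g_def)
  qed

  have fcont: "continuous_on U (f k)" for k using diff differentiable_imp_continuous_on by blast
  have pcont: "continuous_on (V \<times> cbox 0 1) (\<lambda>z. p (fst z) (snd z))"
    unfolding p_def by (intro continuous_intros)
  have pimg: "(\<lambda>z. p (fst z) (snd z)) ` (V \<times> cbox 0 1) \<subseteq> U" using pV V(3) by auto
  have Ccont: "continuous_on (V \<times> cbox 0 1) (\<lambda>z. C m (fst z) (snd z))" for m
  proof -
    have a: "continuous_on (V \<times> cbox 0 1) (\<lambda>z. pd m (f k) (p (fst z) (snd z)))" for k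
      using continuous_on_compose2[OF cont pcont pimg] .
    have b: "continuous_on (V \<times> cbox 0 1) (\<lambda>z. f m (p (fst z) (snd z)))"
      using continuous_on_compose2[OF fcont pcont pimg] .
    show ?thesis unfolding C_def by (intro continuous_intros a b)
  qed
  have fxcont: "continuous_on (V \<times> cbox 0 1) (\<lambda>(y, t). fx y t)"
  proof -
    have "continuous_on (V \<times> cbox 0 1) (\<lambda>z. \<Sum>m\<in>UNIV. C m (fst z) (snd z) *\<^sub>R Bm m)"
      by (intro continuous_intros Ccont)
    then show ?thesis by (simp add: fx_def case_prod_unfold)
  qed
  have tcont: "continuous_on (cbox 0 1) (\<lambda>t. h (y, t))" 
    if "continuous_on (V \<times> cbox 0 1) h" "y \<in> V" for y and h :: "(real^'n) \<times> real \<Rightarrow> 'z::topological_space"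
  proof -
    have "continuous_on (cbox 0 1) (\<lambda>t::real. (y, t))" by (intro continuous_intros)
    moreover have "(\<lambda>t::real. (y, t)) ` cbox 0 1 \<subseteq> V \<times> cbox 0 1" using that(2) by auto
    ultimately show ?thesis using continuous_on_compose2[OF that(1)] by blast
  qed
  have gint: "g y integrable_on cbox 0 1" if "y \<in> V" for y
  proof -
    have pimg1: "(\<lambda>t. p y t) ` cbox 0 1 \<subseteq> U" using pV[OF that] V(3) by auto
    have "continuous_on (cbox 0 1) (\<lambda>t. p y t)" unfolding p_def by (intro continuous_intros)
    hence "continuous_on (cbox 0 1) (\<lambda>t. f k (p y t))" for k
      using continuous_on_compose2[OF fcont _ pimg1] by blast
    hence "continuous_on (cbox 0 1) (g y)" unfolding g_def by (intro continuous_intros)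
    thus ?thesis by (rule integrable_continuous)
  qed
  have fxint: "fx y integrable_on cbox 0 1" if "y \<in> V" for y
    using tcont[OF fxcont that] by (intro integrable_continuous) simp
  have Cint: "C i y integrable_on cbox 0 1" if "y \<in> V" for y i
    using tcont[OF Ccont that] by (intro integrable_continuous) simp
  have uder: "(u has_derivative blinfun_apply (integral (cbox 0 1) (fx y))) (at y within V)" if "y \<in> V" for y
    unfolding u_def[abs_def]
    by (rule leibniz_rule[OF gder gint fxcont that V(4)])
  have ftc: "(C i y has_integral f i y) {0..1}" if y: "y \<in> V" for i y
  proof -
    have vd: "((\<lambda>s. s * f i (p y s)) has_vector_derivative C i y t) (at t within {0..1})"
      if t: "t \<in> {0..1}" for t
    proof -
      have pU: "p y t \<in> U" using pV[OF y] t V(3) by (auto simp: cbox_interval)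
      let ?Df = "frechet_derivative (f i) (at (p y t))"
      have l: "linear ?Df" using has_derivative_linear[OF fdiff[OF pU]] .
      have pder: "((\<lambda>s. p y s) has_derivative (\<lambda>h. h *\<^sub>R (y - x0))) (at t)"
        unfolding p_def by (auto intro!: derivative_eq_intros)
      have "((\<lambda>s. f i (p y s)) has_derivative (\<lambda>h. ?Df (h *\<^sub>R (y - x0)))) (at t)"
        using has_derivative_compose[OF pder fdiff[OF pU]] .
      moreover have "(\<lambda>h. ?Df (h *\<^sub>R (y - x0))) = (*) (?Df (y - x0))"
        using l by (auto simp: linear_scale mult.commute)
      ultimately have d1: "((\<lambda>s. f i (p y s)) has_real_derivative ?Df (y - x0)) (at t)"
        unfolding has_field_derivative_def by simp
      have d2: "((\<lambda>s. s * f i (p y s)) has_real_derivative 1 * f i (p y t) + t * ?Df (y - x0)) (at t)"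
        using DERIV_mult[OF DERIV_ident d1] by (simp add: mult.commute)
      have "?Df (y - x0) = (\<Sum>m\<in>UNIV. (y - x0) $ m * pd m (f i) (p y t))"
        by (rule frechet_expand[OF fdiff[OF pU]])
      hence "1 * f i (p y t) + t * ?Df (y - x0) = C i y t"
        unfolding C_def using closed[OF pU] by (simp add: sum_distrib_left algebra_simps)
      with d2 show ?thesis
        by (simp add: has_real_derivative_iff_has_vector_derivative has_vector_derivative_at_within)
    qed
    have "(C i y has_integral (1 * f i (p y 1) - 0 * f i (p y 0))) {0..1}"
      using fundamental_theorem_of_calculus[OF _ vd] by simp
    thus ?thesis by (simp add: p_def)
  qed
  have pdu: "pd i u y = f i y" if "y \<in> V" for i y
  proof -
    have "(u has_derivative blinfun_apply (integral (cbox 0 1) (fx y))) (at y)"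
      using uder[OF that] by (simp only: at_within_open[OF that V(1)])
    hence "pd i u y = blinfun_apply (integral (cbox 0 1) (fx y)) (axis i 1)" by (rule pd_frechet)
    also have "\<dots> = integral (cbox 0 1) (\<lambda>t. blinfun_apply (fx y t) (axis i 1))"
      by (rule blinfun_apply_integral[OF fxint[OF that]])
    also have "\<dots> = integral (cbox 0 1) (C i y)"
      by (simp add: fx_def blinfun.sum_left blinfun.scaleR_left axis_sum)
    also have "\<dots> = f i y" using ftc[OF that] by (simp add: cbox_interval integral_unique)
    finally show ?thesis .
  qed
  have "u differentiable_on V"
    unfolding differentiable_on_def differentiable_def using uder by blast
  with V pdu show ?thesis by blast
qed



lemma alg_c:
  fixes a q mi mj ei ej aj :: real
  assumes "mi \<noteq> 0" "mi * (a * ej - q) - mj * (a * ei - q) \<noteq> 0"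
  shows "((aj * ei + a * (mi * (ej - ei)^2 / (mi * (a * ej - q) - mj * (a * ei - q)) * aj) - ej * aj) * mi
          - (a * ei - q) * (mi * (ej - ei) * (mj - mi) / (mi * (a * ej - q) - mj * (a * ei - q)) * aj)) / mi^2 = 0"
proof -
  define D where "D = mi * (a * ej - q) - mj * (a * ei - q)"
  have D: "D \<noteq> 0" using assms by (simp add: D_def)
  have "(aj * ei + a * (mi * (ej - ei)^2 / D * aj) - ej * aj) * mi
          - (a * ei - q) * (mi * (ej - ei) * (mj - mi) / D * aj)
        = mi * aj * (ej - ei) / D * (- D + a * mi * (ej - ei) - (a * ei - q) * (mj - mi))"
    using D by (simp add: field_simps power2_eq_square)
  also have "- D + a * mi * (ej - ei) - (a * ei - q) * (mj - mi) = 0"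
    by (simp add: D_def algebra_simps)
  finally show ?thesis by (simp add: D_def)
qed

lemma alg_f:
  fixes mk mm ek em Ak Am Akm Dkm :: real
  assumes "mk \<noteq> 0" "Dkm \<noteq> 0"
  shows "(((mk + mm) * (em - ek) / Dkm * Ak * Am) * mk - Ak * (mk * (em - ek) * (mm - mk) / Dkm * Am)) / mk^2
        = 2 * (em - ek) / Dkm * Ak * Am"
  using assms by (simp add: field_simps power2_eq_square)

lemma alg_u:
  fixes mi mj Ni Nj ei ej Ai Aj :: real
  assumes "mi \<noteq> 0" "mj \<noteq> 0" "mi * Nj - mj * Ni \<noteq> 0"
  shows "2 * (ej - ei) / (mi * Nj - mj * Ni) * Ai * Aj = 2 * (ej - ei) / (Nj / mj - Ni / mi) * (Ai / mi) * (Aj / mj)"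
proof -
  have "Nj / mj - Ni / mi = (mi * Nj - mj * Ni) / (mi * mj)" using assms by (simp add: field_simps)
  thus ?thesis using assms by (simp add: field_simps)
qed

lemma alg_eta:
  fixes mi mj Ni Nj ei ej Aj :: real
  assumes "mi \<noteq> 0" "mj \<noteq> 0" "mi * Nj - mj * Ni \<noteq> 0"
  shows "mi * (ej - ei)^2 / (mi * Nj - mj * Ni) * Aj = (ej - ei)^2 / (Nj / mj - Ni / mi) * (Aj / mj)"
proof -
  have "Nj / mj - Ni / mi = (mi * Nj - mj * Ni) / (mi * mj)" using assms by (simp add: field_simps)
  thus ?thesis using assms by (simp add: field_simps)
qed

lemma alg_mu:
  fixes mi mj Ni Nj ei ej Aj :: real
  assumes "mi \<noteq> 0" "mj \<noteq> 0" "mi * Nj - mj * Ni \<noteq> 0"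
  shows "mi * (ej - ei) * (mj - mi) / (mi * Nj - mj * Ni) * Aj = (ej - ei) * (mj - mi) / (Nj / mj - Ni / mi) * (Aj / mj)"
proof -
  have "Nj / mj - Ni / mi = (mi * Nj - mj * Ni) / (mi * mj)" using assms by (simp add: field_simps)
  thus ?thesis using assms by (simp add: field_simps)
qed

lemma alg_sym:
  fixes mk mm Nk Nm ek em Ak Am :: real
  shows "2 * (em - ek) / (mk * Nm - mm * Nk) * Ak * Am = 2 * (ek - em) / (mm * Nk - mk * Nm) * Am * Ak"
proof (cases "mk * Nm - mm * Nk = 0")
  case True
  hence "mm * Nk - mk * Nm = 0" by simp
  with True show ?thesis by simp
next
  case False
  hence "mm * Nk - mk * Nm \<noteq> 0" by simp
  with False show ?thesis by (simp add: field_simps)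
qed



lemma pd_div:
  fixes f g :: "real^'n::finite \<Rightarrow> real"
  assumes "f differentiable (at x)" "g differentiable (at x)" "g x \<noteq> 0"
  shows "pd i (\<lambda>y. f y / g y) x = (pd i f x * g x - f x * pd i g x) / (g x)^2"
  unfolding pd_def[of i "\<lambda>y. f y / g y"]
  using DERIV_divide[OF pd_has[OF assms(1), of i] pd_has[OF assms(2), of i]] assms(3)
  by (intro DERIV_imp_deriv) (simp add: power2_eq_square)

lemma pd_c:
  fixes a e q m :: "real^'n::finite \<Rightarrow> real"
  assumes "a differentiable (at x)" "e differentiable (at x)" "q differentiable (at x)"
    "m differentiable (at x)" "m x \<noteq> 0"
  shows "pd j (\<lambda>y. (a y * e y - q y) / m y) x =
     ((pd j a x * e x + a x * pd j e x - pd j q x) * m x - (a x * e x - q x) * pd j m x) / (m x)^2"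
proof -
  note h = pd_has[OF assms(1), of j] pd_has[OF assms(2), of j] pd_has[OF assms(3), of j] pd_has[OF assms(4), of j]
  have "DERIV (\<lambda>t. (a (x + t *\<^sub>R axis j 1) * e (x + t *\<^sub>R axis j 1) - q (x + t *\<^sub>R axis j 1)) / m (x + t *\<^sub>R axis j 1)) 0 :>
     ((pd j a x * e x + a x * pd j e x - pd j q x) * m x - (a x * e x - q x) * pd j m x) / (m x)^2"
    using DERIV_divide[OF DERIV_diff[OF DERIV_mult[OF h(1,2)] h(3)] h(4)] assms(5)
    by (simp add: power2_eq_square mult.commute)
  thus ?thesis unfolding pd_def[of j "\<lambda>y. (a y * e y - q y) / m y"] by (rule DERIV_imp_deriv)
qed

lemma smooth_diff_at: "smooth_on U h \<Longrightarrow> open U \<Longrightarrow> x \<in> U \<Longrightarrow> pds js h differentiable (at x)"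
  using Cn_diff_at[of U "length js" h js x] smooth_Cn by blast

theorem mainTheorem13:
  fixes U :: "(real^'n::finite) set"
    and a q :: "real^'n \<Rightarrow> real"
    and \<mu> \<eta> :: "'n \<Rightarrow> real^'n \<Rightarrow> real"
  assumes U_open: "open U"
    and sm_a: "smooth_on U a" and sm_q: "smooth_on U q"
    and sm_mu: "\<And>i. smooth_on U (\<mu> i)" and sm_eta: "\<And>i. smooth_on U (\<eta> i)"
    and mu_nz: "\<And>i x. x \<in> U \<Longrightarrow> \<mu> i x \<noteq> 0"
    and D_nz: "\<And>i j x. i \<noteq> j \<Longrightarrow> x \<in> U \<Longrightarrow>
        \<mu> i x * (a x * \<eta> j x - q x) - \<mu> j x * (a x * \<eta> i x - q x) \<noteq> 0"
    and eq_q: "\<And>i x. x \<in> U \<Longrightarrow> pd i q x = \<eta> i x * pd i a x"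
    and eq_a: "\<And>i j x. i \<noteq> j \<Longrightarrow> x \<in> U \<Longrightarrow>
        pd j (pd i a) x =
          (\<mu> i x + \<mu> j x) * (\<eta> j x - \<eta> i x)
          / (\<mu> i x * (a x * \<eta> j x - q x) - \<mu> j x * (a x * \<eta> i x - q x))
          * pd i a x * pd j a x"
    and eq_eta: "\<And>i j x. i \<noteq> j \<Longrightarrow> x \<in> U \<Longrightarrow>
        pd j (\<eta> i) x =
          \<mu> i x * (\<eta> j x - \<eta> i x)^2
          / (\<mu> i x * (a x * \<eta> j x - q x) - \<mu> j x * (a x * \<eta> i x - q x))
          * pd j a x"
    and eq_mu: "\<And>i j x. i \<noteq> j \<Longrightarrow> x \<in> U \<Longrightarrow>
        pd j (\<mu> i) x =
          \<mu> i x * (\<eta> j x - \<eta> i x) * (\<mu> j x - \<mu> i x)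
          / (\<mu> i x * (a x * \<eta> j x - q x) - \<mu> j x * (a x * \<eta> i x - q x))
          * pd j a x"
  shows "(\<forall>i j x. i \<noteq> j \<longrightarrow> x \<in> U \<longrightarrow>
            pd j (\<lambda>y. (a y * \<eta> i y - q y) / \<mu> i y) x = 0)
       \<and> (\<forall>x0\<in>U. \<exists>V u. open V \<and> x0 \<in> V \<and> V \<subseteq> U \<and> smooth_on V u \<and>
            (\<forall>i. \<forall>x\<in>V. pd i u x = pd i a x / \<mu> i x) \<and>
            (let c = (\<lambda>i y. (a y * \<eta> i y - q y) / \<mu> i y) in
             (\<forall>i. \<forall>x\<in>V. pd i q x = \<mu> i x * \<eta> i x * pd i u x) \<and>
             (\<forall>i j. \<forall>x\<in>V. i \<noteq> j \<longrightarrow>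
                pd j (pd i u) x = 2 * (\<eta> j x - \<eta> i x) / (c j x - c i x) * pd i u x * pd j u x) \<and>
             (\<forall>i j. \<forall>x\<in>V. i \<noteq> j \<longrightarrow>
                pd j (\<eta> i) x = (\<eta> j x - \<eta> i x)^2 / (c j x - c i x) * pd j u x) \<and>
             (\<forall>i j. \<forall>x\<in>V. i \<noteq> j \<longrightarrow>
                pd j (\<mu> i) x = (\<eta> j x - \<eta> i x) * (\<mu> j x - \<mu> i x) / (c j x - c i x) * pd j u x)))"
proof -
  have dA: "a differentiable (at x)" "q differentiable (at x)" "\<mu> i differentiable (at x)"
    "\<eta> i differentiable (at x)" "pd i a differentiable (at x)" if "x \<in> U" for x i
    using smooth_diff_at[OF sm_a U_open that, of "[]"] smooth_diff_at[OF sm_q U_open that, of "[]"]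
      smooth_diff_at[OF sm_mu U_open that, of "[]"] smooth_diff_at[OF sm_eta U_open that, of "[]"]
      smooth_diff_at[OF sm_a U_open that, of "[i]"] by simp_all
  have part1: "pd j (\<lambda>y. (a y * \<eta> i y - q y) / \<mu> i y) x = 0" if ij: "i \<noteq> j" and x: "x \<in> U" for i j x
  proof -
    have "pd j (\<lambda>y. (a y * \<eta> i y - q y) / \<mu> i y) x =
     ((pd j a x * \<eta> i x + a x * pd j (\<eta> i) x - pd j q x) * \<mu> i x - (a x * \<eta> i x - q x) * pd j (\<mu> i) x) / (\<mu> i x)^2"
      by (rule pd_c[OF dA(1)[OF x] dA(4)[OF x] dA(2)[OF x] dA(3)[OF x] mu_nz[OF x]])
    also have "\<dots> = 0"
      unfolding eq_eta[OF ij x] eq_q[OF x] eq_mu[OF ij x]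
      by (rule alg_c[OF mu_nz[OF x] D_nz[OF ij x]])
    finally show ?thesis .
  qed
  define f where "f k y = pd k a y / \<mu> k y" for k y
  have fCn: "Cn U n (f k)" for n k
  proof -
    have c1: "Cn U n (pd k a)" using Cn_pd[of U n a k] sm_a unfolding smooth_Cn by blast
    have c2: "Cn U n (\<lambda>y. 1 / \<mu> k y)" using Cn_inv[OF U_open, of "\<mu> k" n] mu_nz[of _ k] sm_mu[of k] unfolding smooth_Cn by blast
    have "Cn U n (\<lambda>y. pd k a y * (1 / \<mu> k y))" by (rule Cn_mult[OF U_open c1 c2])
    moreover have "(\<lambda>y. pd k a y * (1 / \<mu> k y)) = f k" by (simp add: f_def fun_eq_iff)
    ultimately show ?thesis by simp
  qed
  have fsm: "smooth_on U (f k)" for k using fCn smooth_Cn by blast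
  have pdf: "pd m (f k) x = 2 * (\<eta> m x - \<eta> k x) /
      (\<mu> k x * (a x * \<eta> m x - q x) - \<mu> m x * (a x * \<eta> k x - q x)) * pd k a x * pd m a x"
    if km: "k \<noteq> m" and x: "x \<in> U" for k m x
  proof -
    have "pd m (f k) x = (pd m (pd k a) x * \<mu> k x - pd k a x * pd m (\<mu> k) x) / (\<mu> k x)^2"
      unfolding f_def[abs_def] by (rule pd_div[OF dA(5)[OF x] dA(3)[OF x] mu_nz[OF x]])
    also have "\<dots> = 2 * (\<eta> m x - \<eta> k x) /
      (\<mu> k x * (a x * \<eta> m x - q x) - \<mu> m x * (a x * \<eta> k x - q x)) * pd k a x * pd m a x"
      unfolding eq_a[OF km x] eq_mu[OF km x]
      by (rule alg_f[OF mu_nz[OF x] D_nz[OF km x]])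
    finally show ?thesis .
  qed
  have closed: "pd m (f k) x = pd k (f m) x" if x: "x \<in> U" for k m x
  proof (cases "k = m")
    case False
    then show ?thesis using pdf[OF False x] pdf[of m k, OF _ x] alg_sym by simp
  qed simp
  have cont: "continuous_on U (pd m (f k))" for k m
  proof -
    have "length [m] \<le> 1 \<longrightarrow> pds [m] (f k) differentiable_on U" using fCn[of 1 k] unfolding Cn_def by blast
    hence "pds [m] (f k) differentiable_on U" by simp
    thus ?thesis by (simp add: differentiable_imp_continuous_on)
  qed
  have P2: "\<exists>V u. open V \<and> x0 \<in> V \<and> V \<subseteq> U \<and> smooth_on V u \<and>
            (\<forall>i. \<forall>x\<in>V. pd i u x = pd i a x / \<mu> i x) \<and>
            (let c = (\<lambda>i y. (a y * \<eta> i y - q y) / \<mu> i y) in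
             (\<forall>i. \<forall>x\<in>V. pd i q x = \<mu> i x * \<eta> i x * pd i u x) \<and>
             (\<forall>i j. \<forall>x\<in>V. i \<noteq> j \<longrightarrow>
                pd j (pd i u) x = 2 * (\<eta> j x - \<eta> i x) / (c j x - c i x) * pd i u x * pd j u x) \<and>
             (\<forall>i j. \<forall>x\<in>V. i \<noteq> j \<longrightarrow>
                pd j (\<eta> i) x = (\<eta> j x - \<eta> i x)^2 / (c j x - c i x) * pd j u x) \<and>
             (\<forall>i j. \<forall>x\<in>V. i \<noteq> j \<longrightarrow>
                pd j (\<mu> i) x = (\<eta> j x - \<eta> i x) * (\<mu> j x - \<mu> i x) / (c j x - c i x) * pd j u x))"
    if x0: "x0 \<in> U" for x0
  proof -
    have ex: "\<exists>V u. open V \<and> x0 \<in> V \<and> V \<subseteq> U \<and> u differentiable_on V \<and> (\<forall>i. \<forall>x\<in>V. pd i u x = f i x)"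
      by (rule poincare[OF U_open x0 Cn_0[OF fCn] cont closed])
    then obtain V u where VV: "open V \<and> x0 \<in> V \<and> V \<subseteq> U \<and> u differentiable_on V \<and> (\<forall>i. \<forall>x\<in>V. pd i u x = f i x)"
      by (elim exE)
    hence V: "open V" "x0 \<in> V" "V \<subseteq> U" "u differentiable_on V"
      and pdu: "\<And>i x. x \<in> V \<Longrightarrow> pd i u x = f i x" by simp_all
    have smu: "smooth_on V u" unfolding smooth_on_def
    proof
      fix js :: "'n list"
      show "pds js u differentiable_on V"
      proof (cases js rule: rev_cases)
        case Nil then show ?thesis using V(4) by simp
      next
        case (snoc js' k)
        have "pds js' (f k) differentiable_on U" using fsm[of k] unfolding smooth_on_def by blast
        hence "pds js' (f k) differentiable_on V" using V(3) differentiable_on_subset by blast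
        hence "pds js' (pd k u) differentiable_on V"
          by (rule diff_on_cong) (rule pds_local[OF V(1)], simp add: pdu)
        then show ?thesis using snoc by (simp add: pds_append)
      qed
    qed
    have xU: "x \<in> V \<Longrightarrow> x \<in> U" for x using V(3) by blast
    have uij: "pd j (pd i u) x = pd j (f i) x" if "x \<in> V" for i j x
      by (rule pd_local[OF V(1) _ that]) (simp add: pdu)
    have c1: "\<forall>i. \<forall>x\<in>V. pd i u x = pd i a x / \<mu> i x" using pdu by (simp add: f_def)
    have c2: "\<forall>i. \<forall>x\<in>V. pd i q x = \<mu> i x * \<eta> i x * pd i u x"
    proof (intro allI ballI)
      fix i :: 'n and x assume x: "x \<in> V"
      show "pd i q x = \<mu> i x * \<eta> i x * pd i u x"
        using pdu[OF x] eq_q[OF xU[OF x]] mu_nz[OF xU[OF x]] by (simp add: f_def)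
    qed
    have D: "\<mu> i x * (a x * \<eta> j x - q x) - \<mu> j x * (a x * \<eta> i x - q x) \<noteq> 0"
      if "x \<in> V" "i \<noteq> j" for i j x
      using D_nz[OF that(2) xU[OF that(1)]] .
    have c3: "\<forall>i j. \<forall>x\<in>V. i \<noteq> j \<longrightarrow> pd j (pd i u) x = 2 * (\<eta> j x - \<eta> i x) / ((a x * \<eta> j x - q x) / \<mu> j x - (a x * \<eta> i x - q x) / \<mu> i x)
         * pd i u x * pd j u x"
    proof (intro allI ballI impI)
      fix i j :: 'n and x assume x: "x \<in> V" and ij: "i \<noteq> j"
      show "pd j (pd i u) x = 2 * (\<eta> j x - \<eta> i x) / ((a x * \<eta> j x - q x) / \<mu> j x - (a x * \<eta> i x - q x) / \<mu> i x)
         * pd i u x * pd j u x"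
        unfolding uij[OF x] pdf[OF ij xU[OF x]] pdu[OF x] f_def
        by (rule alg_u[OF mu_nz[OF xU[OF x]] mu_nz[OF xU[OF x]] D[OF x ij]])
    qed
    have c4: "\<forall>i j. \<forall>x\<in>V. i \<noteq> j \<longrightarrow> pd j (\<eta> i) x = (\<eta> j x - \<eta> i x)^2 / ((a x * \<eta> j x - q x) / \<mu> j x - (a x * \<eta> i x - q x) / \<mu> i x)
         * pd j u x"
    proof (intro allI ballI impI)
      fix i j :: 'n and x assume x: "x \<in> V" and ij: "i \<noteq> j"
      show "pd j (\<eta> i) x = (\<eta> j x - \<eta> i x)^2 / ((a x * \<eta> j x - q x) / \<mu> j x - (a x * \<eta> i x - q x) / \<mu> i x)
         * pd j u x"
        unfolding eq_eta[OF ij xU[OF x]] pdu[OF x] f_def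
        by (rule alg_eta[OF mu_nz[OF xU[OF x]] mu_nz[OF xU[OF x]] D[OF x ij]])
    qed
    have c5: "\<forall>i j. \<forall>x\<in>V. i \<noteq> j \<longrightarrow> pd j (\<mu> i) x = (\<eta> j x - \<eta> i x) * (\<mu> j x - \<mu> i x) / ((a x * \<eta> j x - q x) / \<mu> j x - (a x * \<eta> i x - q x) / \<mu> i x)
         * pd j u x"
    proof (intro allI ballI impI)
      fix i j :: 'n and x assume x: "x \<in> V" and ij: "i \<noteq> j"
      show "pd j (\<mu> i) x = (\<eta> j x - \<eta> i x) * (\<mu> j x - \<mu> i x) / ((a x * \<eta> j x - q x) / \<mu> j x - (a x * \<eta> i x - q x) / \<mu> i x)
         * pd j u x"
        unfolding eq_mu[OF ij xU[OF x]] pdu[OF x] f_def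
        by (rule alg_mu[OF mu_nz[OF xU[OF x]] mu_nz[OF xU[OF x]] D[OF x ij]])
    qed
    show ?thesis unfolding Let_def
      by (intro exI[of _ V] exI[of _ u] conjI V(1-3) smu c1 c2 c3 c4 c5)
  qed
  show ?thesis
  proof (rule conjI[OF _ ballI[OF P2]])
    show "\<forall>i j x. i \<noteq> j \<longrightarrow> x \<in> U \<longrightarrow> pd j (\<lambda>y. (a y * \<eta> i y - q y) / \<mu> i y) x = 0"
      by (intro allI impI part1)
  qed
qed

end
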